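(* Let $t\in[0,T]$. (a) For every $X\in\mathbb{L}^\infty(\mathbb{R}_-,\mathcal{F}_T)$ there exists a unique $Z_t\in\mathbb{L}^\infty(\mathbb{R}_-,\mathcal{F}_t)$ such that $\operatorname{ess\,inf}_{\mathcal{F}_0}(Z_t1_{F_t})=\operatorname{ess\,inf}_{\mathcal{F}_0}(X1_{F_t})$ for all $F_t\in\mathcal{F}_t$. (b) For every $X\in\mathbb{L}^\infty(\mathbb{R},\mathcal{F}_T)$ with $X<0$ a.s. there exists a unique $Z_t\in\mathbb{L}^0(\mathbb{R}_-,\mathcal{F}_t)$ bounded from below such that $\operatorname{ess\,inf}_{\mathcal{F}_0}(Z_t1_{F_t})=\operatorname{ess\,inf}_{\mathcal{F}_0}(X1_{F_t})$ for all $F_t\in\mathcal{F}_t$.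
   Context: Let $(\Omega,\mathcal{F},\mathbb{P})$ be a complete probability space and $(\mathcal{F}_t)_{t\in[0,T]}$ a filtration of complete sub-$\sigma$-algebras of $\mathcal{F}$ ($\mathcal{F}_s\subseteq\mathcal{F}_t$ for $s\le t$). $\mathbb{L}^0(G,\mathcal{G})$ denotes the $\mathcal{G}$-measurable random variables a.s. valued in $G$ and $\mathbb{L}^\infty(G,\mathcal{G})$ the essentially bounded ones; $\mathbb{R}_-=(-\infty,0]$. For a sub-$\sigma$-algebra $\mathcal{G}$, $\operatorname{ess\,sup}_{\mathcal{G}}(Y)$ is the smallest (a.s.) $\mathcal{G}$-measurable $\overline{\mathbb{R}}$-valued random variable dominating $Y$ a.s., and $\operatorname{ess\,inf}_{\mathcal{G}}(Y)=-\operatorname{ess\,sup}_{\mathcal{G}}(-Y)$ is the largest $\mathcal{G}$-measurable random variable dominated by $Y$ a.s. *)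

theory Defs
  imports "HOL-Probability.Probability"
begin

definition complete_subalgebra :: "'a measure \<Rightarrow> 'a measure \<Rightarrow> bool" where
  "complete_subalgebra M G \<longleftrightarrow> subalgebra M G \<and> null_sets M \<subseteq> sets G"

definition is_cond_ess_sup :: "'a measure \<Rightarrow> 'a measure \<Rightarrow> ('a \<Rightarrow> real) \<Rightarrow> ('a \<Rightarrow> ereal) \<Rightarrow> bool" where
  "is_cond_ess_sup M G Y S \<longleftrightarrow>
     S \<in> borel_measurable G \<and> (AE x in M. ereal (Y x) \<le> S x) \<and>
     (\<forall>S' \<in> borel_measurable G. (AE x in M. ereal (Y x) \<le> S' x) \<longrightarrow> (AE x in M. S x \<le> S' x))"

definition cond_ess_sup :: "'a measure \<Rightarrow> 'a measure \<Rightarrow> ('a \<Rightarrow> real) \<Rightarrow> ('a \<Rightarrow> ereal)" where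
  "cond_ess_sup M G Y = (SOME S. is_cond_ess_sup M G Y S)"

definition cond_ess_inf :: "'a measure \<Rightarrow> 'a measure \<Rightarrow> ('a \<Rightarrow> real) \<Rightarrow> ('a \<Rightarrow> ereal)" where
  "cond_ess_inf M G Y = (\<lambda>x. - cond_ess_sup M G (\<lambda>y. - Y y) x)"

definition Linf_nonpos :: "'a measure \<Rightarrow> 'a measure \<Rightarrow> ('a \<Rightarrow> real) \<Rightarrow> bool" where
  "Linf_nonpos M G Z \<longleftrightarrow> Z \<in> borel_measurable G \<and> (AE x in M. Z x \<le> 0) \<and>
     (\<exists>C. AE x in M. \<bar>Z x\<bar> \<le> C)"

end

theory Submission imports Defs begin

definition earctan :: "ereal \<Rightarrow> real" where
  "earctan e = (case e of ereal r \<Rightarrow> arctan r | PInfty \<Rightarrow> pi/2 | MInfty \<Rightarrow> -(pi/2))"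

lemma earctan_strict: "a < b \<Longrightarrow> earctan a < earctan b"
  using arctan_bounded[of "real_of_ereal a"] arctan_bounded[of "real_of_ereal b"]
  by (cases a; cases b) (auto simp: earctan_def arctan_less_iff)

lemma earctan_mono: "a \<le> b \<Longrightarrow> earctan a \<le> earctan b"
  using earctan_strict[of a b] by (cases "a = b") (auto simp: order.order_iff_strict)

lemma earctan_bound: "\<bar>earctan a\<bar> \<le> pi/2"
  using arctan_bounded[of "real_of_ereal a"]
  by (cases a) (auto simp: earctan_def abs_le_iff)

lemma earctan_lb: "- (pi/2) \<le> earctan a"
  using earctan_bound[of a] by (simp add: abs_le_iff)

lemma earctan_meas:
  assumes "f \<in> borel_measurable M"
  shows "(\<lambda>x. earctan (f x)) \<in> borel_measurable M"
proof (rule borel_measurable_ereal_cases[OF assms])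
  show "(\<lambda>x. earctan (ereal (real_of_ereal (f x)))) \<in> borel_measurable M"
    using assms by (simp add: earctan_def)
qed

lemma cond_ess_sup_exists:
  assumes P: "prob_space M" and sub: "subalgebra M G"
  shows "\<exists>S. is_cond_ess_sup M G Y S"
proof -
  interpret prob_space M by fact
  define SS where "SS = {S \<in> borel_measurable G. AE x in M. ereal (Y x) \<le> S x}"
  define f where "f S = (\<integral>x. earctan (S x) \<partial>M)" for S :: "'a \<Rightarrow> ereal"
  have meas: "(\<lambda>x. earctan (S x)) \<in> borel_measurable M" if "S \<in> borel_measurable G" for S
    using measurable_from_subalg[OF sub that] earctan_meas by blast
  have int: "integrable M (\<lambda>x. earctan (S x))" if "S \<in> borel_measurable G" for S
    by (rule integrable_const_bound[where B="pi/2"]) (use earctan_bound in \<open>auto simp: meas that\<close>)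
  have top: "(\<lambda>_. \<infinity>) \<in> SS" by (simp add: SS_def)
  have lb: "- (pi/2) \<le> f S" if "S \<in> borel_measurable G" for S
  proof -
    have "(\<integral>x. - (pi/2) \<partial>M) \<le> f S"
      unfolding f_def
      by (rule integral_mono[OF integrable_const int[OF that]])
         (simp add: earctan_lb)
    then show ?thesis by (simp add: prob_space)
  qed
  have bdd: "bdd_below (f ` SS)"
    using lb unfolding SS_def bdd_below_def by blast
  define m where "m = Inf (f ` SS)"
  have "\<forall>n. \<exists>S\<in>SS. f S < m + 1 / Suc n"
  proof
    fix n
    have "Inf (f ` SS) < m + 1 / Suc n" unfolding m_def by simp
    then obtain y where "y \<in> f ` SS" "y < m + 1 / Suc n"
      using cInf_lessD[of "f ` SS"] top by blast
    then show "\<exists>S\<in>SS. f S < m + 1 / Suc n" by blast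
  qed
  then obtain Sq where Sq: "\<And>n. Sq n \<in> SS" "\<And>n. f (Sq n) < m + 1 / Suc n"
    by metis
  define S where "S x = (INF n. Sq n x)" for x
  have Sq_meas: "Sq n \<in> borel_measurable G" for n using Sq(1) by (simp add: SS_def)
  have S_meas: "S \<in> borel_measurable G"
    unfolding S_def by (rule borel_measurable_INF) (auto simp: Sq_meas)
  have "\<forall>n. AE x in M. ereal (Y x) \<le> Sq n x" using Sq(1) by (simp add: SS_def)
  then have "AE x in M. \<forall>n. ereal (Y x) \<le> Sq n x" by (simp add: AE_all_countable)
  then have S_AE: "AE x in M. ereal (Y x) \<le> S x"
    by eventually_elim (simp add: S_def le_INF_iff)
  have le: "f S \<le> f (Sq n)" for n
    unfolding f_def
    by (rule integral_mono[OF int[OF S_meas] int[OF Sq_meas]])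
       (auto simp: S_def intro!: earctan_mono INF_lower)
  have fSm: "f S \<le> m"
  proof (rule ccontr)
    assume "\<not> f S \<le> m"
    then have "0 < f S - m" by simp
    then obtain n where "inverse (real (Suc n)) < f S - m"
      using reals_Archimedean by blast
    with le[of n] Sq(2)[of n] show False by (simp add: inverse_eq_divide)
  qed
  show ?thesis
  proof (intro exI, unfold is_cond_ess_sup_def, intro conjI ballI impI)
    show "S \<in> borel_measurable G" by (fact S_meas)
    show "AE x in M. ereal (Y x) \<le> S x" by (fact S_AE)
    fix S' assume S'm: "S' \<in> borel_measurable G" and S'AE: "AE x in M. ereal (Y x) \<le> S' x"
    define S'' where "S'' x = min (S x) (S' x)" for x
    have S''m: "S'' \<in> borel_measurable G" unfolding S''_def using S_meas S'm by measurable
    have "S'' \<in> SS" using S''m S_AE S'AE unfolding SS_def S''_def by auto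
    then have "m \<le> f S''" unfolding m_def by (intro cInf_lower bdd) auto
    then have "f S - f S'' \<le> 0" using fSm by simp
    moreover have "f S - f S'' = (\<integral>x. earctan (S x) - earctan (S'' x) \<partial>M)"
      unfolding f_def by (rule Bochner_Integration.integral_diff[symmetric, OF int[OF S_meas] int[OF S''m]])
    moreover have nn: "AE x in M. 0 \<le> earctan (S x) - earctan (S'' x)"
      by (auto simp: S''_def intro!: earctan_mono)
    ultimately have "(\<integral>x. earctan (S x) - earctan (S'' x) \<partial>M) = 0"
      using integral_nonneg_AE[OF nn] by linarith
    then have "AE x in M. earctan (S x) - earctan (S'' x) = 0"
      using integral_nonneg_eq_0_iff_AE[OF Bochner_Integration.integrable_diff[OF int[OF S_meas] int[OF S''m]] nn]
      by simp
    then show "AE x in M. S x \<le> S' x"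
    proof eventually_elim
      case (elim x)
      show ?case
      proof (rule ccontr)
        assume "\<not> S x \<le> S' x"
        then have "S'' x < S x" by (auto simp: S''_def)
        then show False using earctan_strict elim by fastforce
      qed
    qed
  qed
qed

lemma cond_ess_sup_prop:
  assumes "prob_space M" "subalgebra M G"
  shows "is_cond_ess_sup M G Y (cond_ess_sup M G Y)"
  unfolding cond_ess_sup_def using cond_ess_sup_exists[OF assms] by (rule someI_ex)

lemma cond_ess_sup_cong:
  assumes "\<And>S. S \<in> borel_measurable G \<Longrightarrow>
     (AE x in M. ereal (Y1 x) \<le> S x) \<longleftrightarrow> (AE x in M. ereal (Y2 x) \<le> S x)"
  shows "cond_ess_sup M G Y1 = cond_ess_sup M G Y2"
proof -
  have "is_cond_ess_sup M G Y1 = is_cond_ess_sup M G Y2"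
    unfolding fun_eq_iff is_cond_ess_sup_def using assms by blast
  then show ?thesis by (simp add: cond_ess_sup_def)
qed

lemma uniq_half:
  assumes P: "prob_space M" and subG: "subalgebra M G" and subH: "subalgebra M H"
    and Zm: "Z \<in> borel_measurable H" and Z'm: "Z' \<in> borel_measurable H"
    and Z0: "AE x in M. Z x \<le> 0"
    and eq: "\<And>A. A \<in> sets H \<Longrightarrow> AE x in M.
        cond_ess_inf M G (\<lambda>y. Z y * indicator A y) x = cond_ess_inf M G (\<lambda>y. Z' y * indicator A y) x"
  shows "AE x in M. Z x \<le> Z' x"
proof -
  have key: "AE x in M. \<not> (Z' x < real_of_rat q \<and> real_of_rat q \<le> Z x)" for q
  proof (cases "real_of_rat q \<le> 0")
    case False
    from Z0 show ?thesis by eventually_elim (use False in linarith)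
  next
    case True
    define r where "r = real_of_rat q"
    define A where "A = {x\<in>space M. Z' x < r \<and> r \<le> Z x}"
    have spH: "space H = space M" using subH by (simp add: subalgebra_def)
    have "A = {x\<in>space H. Z' x < r \<and> r \<le> Z x}" unfolding A_def spH ..
    also have "\<dots> \<in> sets H" using Zm Z'm by measurable
    finally have AH: "A \<in> sets H" .
    define E where "E = cond_ess_sup M G (\<lambda>y. - (Z y * indicator A y))"
    define E' where "E' = cond_ess_sup M G (\<lambda>y. - (Z' y * indicator A y))"
    have iE: "is_cond_ess_sup M G (\<lambda>y. - (Z y * indicator A y)) E"
      unfolding E_def by (rule cond_ess_sup_prop[OF P subG])
    have iE': "is_cond_ess_sup M G (\<lambda>y. - (Z' y * indicator A y)) E'"
      unfolding E'_def by (rule cond_ess_sup_prop[OF P subG])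
    have "AE x in M. ereal (- (Z x * indicator A x)) \<le> ereal (- r)"
      using True by (intro AE_I2) (auto simp: A_def r_def indicator_def)
    then have E1: "AE x in M. E x \<le> ereal (- r)"
      using iE unfolding is_cond_ess_sup_def by auto
    have E2: "AE x in M. ereal (- (Z' x * indicator A x)) \<le> E' x"
      using iE' unfolding is_cond_ess_sup_def by auto
    have E3: "AE x in M. E x = E' x"
      using eq[OF AH] unfolding cond_ess_inf_def E_def E'_def by simp
    from E1 E2 E3 AE_space show ?thesis
    proof eventually_elim
      case (elim x)
      show ?case
      proof
        assume a: "Z' x < real_of_rat q \<and> real_of_rat q \<le> Z x"
        then have "x \<in> A \<or> x \<notin> space M" by (auto simp: A_def r_def)
        show False
        proof (cases "x \<in> A")
          case True
          with elim have "ereal (- Z' x) \<le> ereal (- r)"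
            by (metis indicator_simps(1) mult.right_neutral order_trans)
          with a show False by (simp add: r_def)
        next
          case False
          with a elim show False by (auto simp: A_def r_def)
        qed
      qed
    qed
  qed
  have "AE x in M. \<forall>q. \<not> (Z' x < real_of_rat q \<and> real_of_rat q \<le> Z x)"
    using key by (simp add: AE_all_countable)
  then show ?thesis
  proof eventually_elim
    case (elim x)
    show ?case
    proof (rule ccontr)
      assume "\<not> Z x \<le> Z' x"
      then obtain q where "Z' x < real_of_rat q" "real_of_rat q < Z x"
        using of_rat_dense[of "Z' x" "Z x"] by auto
      with elim show False by auto
    qed
  qed
qed

lemma uniq:
  assumes P: "prob_space M" and subG: "subalgebra M G" and subH: "subalgebra M H"
    and Zm: "Z \<in> borel_measurable H" and Z'm: "Z' \<in> borel_measurable H"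
    and Z0: "AE x in M. Z x \<le> 0" and Z'0: "AE x in M. Z' x \<le> 0"
    and eq: "\<And>A. A \<in> sets H \<Longrightarrow> AE x in M.
        cond_ess_inf M G (\<lambda>y. Z y * indicator A y) x = cond_ess_inf M G (\<lambda>y. Z' y * indicator A y) x"
  shows "AE x in M. Z' x = Z x"
proof -
  have "AE x in M. Z x \<le> Z' x" by (rule uniq_half[OF P subG subH Zm Z'm Z0 eq])
  moreover have "AE x in M. Z' x \<le> Z x"
    by (rule uniq_half[OF P subG subH Z'm Zm Z'0]) (use eq in \<open>force elim: AE_mp\<close>)
  ultimately show ?thesis by eventually_elim simp
qed

lemma ereal_neg_le: "ereal (- a) \<le> s \<longleftrightarrow> - s \<le> ereal a"
  by (metis ereal_uminus_le_reorder uminus_ereal.simps(1))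

lemma exist:
  assumes P: "prob_space M" and subG: "subalgebra M G" and subH: "subalgebra M H"
    and GH: "sets G \<subseteq> sets H"
    and X0: "AE x in M. X x \<le> 0" and XC: "AE x in M. \<bar>X x\<bar> \<le> C"
  shows "\<exists>Z. Z \<in> borel_measurable H \<and> (AE x in M. Z x \<le> 0) \<and> (AE x in M. \<bar>Z x\<bar> \<le> C) \<and>
     (\<forall>A \<in> sets H. cond_ess_inf M G (\<lambda>y. Z y * indicator A y) = cond_ess_inf M G (\<lambda>y. X y * indicator A y))"
proof -
  obtain S where iS: "is_cond_ess_sup M H (\<lambda>y. - X y) S"
    using cond_ess_sup_exists[OF P subH] by blast
  have Sm: "S \<in> borel_measurable H" and SX: "AE x in M. ereal (- X x) \<le> S x"
    and Smin: "\<And>S'. S' \<in> borel_measurable H \<Longrightarrow> AE x in M. ereal (- X x) \<le> S' x \<Longrightarrow> AE x in M. S x \<le> S' x"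
    using iS unfolding is_cond_ess_sup_def by auto
  have "AE x in M. ereal (- X x) \<le> ereal C" using XC by eventually_elim simp
  then have SC: "AE x in M. S x \<le> ereal C" by (intro Smin) auto
  define Z where "Z x = - real_of_ereal (S x)" for x
  have Zm: "Z \<in> borel_measurable H" unfolding Z_def using Sm by measurable
  have ZS: "AE x in M. ereal (Z x) = - S x \<and> 0 \<le> S x \<and> S x \<le> ereal C"
    using SC SX X0
  proof eventually_elim
    case (elim x)
    then have "0 \<le> S x" by (metis ereal_less_eq(5) neg_0_le_iff_le order_trans)
    moreover have "S x \<noteq> \<infinity>" using elim by auto
    ultimately show ?case using elim by (cases "S x") (auto simp: Z_def)
  qed
  have Z0: "AE x in M. Z x \<le> 0" using ZS by eventually_elim (auto simp: Z_def real_of_ereal_pos)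
  have ZC: "AE x in M. \<bar>Z x\<bar> \<le> C" using ZS
  proof eventually_elim
    case (elim x)
    then show ?case by (cases "S x") (auto simp: Z_def)
  qed
  have ZX: "AE x in M. Z x \<le> X x" using ZS SX
  proof eventually_elim
    case (elim x)
    then show ?case by (cases "S x") (auto simp: Z_def)
  qed
  have maxi: "AE x in M. V x \<le> ereal (Z x)"
    if Vm: "V \<in> borel_measurable H" and VX: "AE x in M. V x \<le> ereal (X x)" for V
  proof -
    have "AE x in M. ereal (- X x) \<le> - V x" using VX
      by eventually_elim (metis ereal_minus_le_minus uminus_ereal.simps(1))
    then have "AE x in M. S x \<le> - V x" by (intro Smin) (use Vm in auto)
    with ZS show ?thesis
      by eventually_elim (metis ereal_uminus_le_reorder ereal_uminus_uminus)
  qed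
  have subHG: "subalgebra H G" using subG subH GH by (simp add: subalgebra_def)
  have main: "cond_ess_inf M G (\<lambda>y. Z y * indicator A y) = cond_ess_inf M G (\<lambda>y. X y * indicator A y)"
    if AH: "A \<in> sets H" for A
  proof -
    have "cond_ess_sup M G (\<lambda>y. - (Z y * indicator A y)) = cond_ess_sup M G (\<lambda>y. - (X y * indicator A y))"
    proof (rule cond_ess_sup_cong)
      fix S' :: "'a \<Rightarrow> ereal" assume S'm: "S' \<in> borel_measurable G"
      show "(AE x in M. ereal (- (Z x * indicator A x)) \<le> S' x) \<longleftrightarrow>
            (AE x in M. ereal (- (X x * indicator A x)) \<le> S' x)"
      proof
        assume "AE x in M. ereal (- (Z x * indicator A x)) \<le> S' x"
        with ZX show "AE x in M. ereal (- (X x * indicator A x)) \<le> S' x"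
          by eventually_elim (auto simp: indicator_def intro: order_trans[rotated])
      next
        assume hyp: "AE x in M. ereal (- (X x * indicator A x)) \<le> S' x"
        define V where "V x = (if x \<in> A then - S' x else ereal (Z x))" for x
        have S'H: "S' \<in> borel_measurable H" using measurable_from_subalg[OF subHG S'm] .
        have Vm: "V \<in> borel_measurable H"
          unfolding V_def using S'H Zm AH by measurable
        have "AE x in M. V x \<le> ereal (X x)" using hyp ZX
          by eventually_elim (auto simp: V_def indicator_def ereal_neg_le)
        then have "AE x in M. V x \<le> ereal (Z x)" by (rule maxi[OF Vm])
        with hyp show "AE x in M. ereal (- (Z x * indicator A x)) \<le> S' x"
          by eventually_elim (auto simp: V_def indicator_def ereal_neg_le split: if_splits)
      qed
    qed
    then show ?thesis unfolding cond_ess_inf_def by simp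
  qed
  show ?thesis using Zm Z0 ZC main by blast
qed


theorem mainTheorem19:
  fixes M :: "'a measure" and F :: "real \<Rightarrow> 'a measure" and T t :: real
  assumes "prob_space M" and "complete_measure M"
    and "\<And>s. s \<in> {0..T} \<Longrightarrow> complete_subalgebra M (F s)"
    and "\<And>s r. s \<in> {0..T} \<Longrightarrow> r \<in> {0..T} \<Longrightarrow> s \<le> r \<Longrightarrow> sets (F s) \<subseteq> sets (F r)"
    and "t \<in> {0..T}"
  shows
   "(\<forall>X. Linf_nonpos M (F T) X \<longrightarrow>
      (\<exists>Z. Linf_nonpos M (F t) Z \<and>
          (\<forall>A \<in> sets (F t). AE x in M.
              cond_ess_inf M (F 0) (\<lambda>y. Z y * indicator A y) x
            = cond_ess_inf M (F 0) (\<lambda>y. X y * indicator A y) x) \<and>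
          (\<forall>Z'. Linf_nonpos M (F t) Z' \<and>
              (\<forall>A \<in> sets (F t). AE x in M.
                 cond_ess_inf M (F 0) (\<lambda>y. Z' y * indicator A y) x
               = cond_ess_inf M (F 0) (\<lambda>y. X y * indicator A y) x)
            \<longrightarrow> (AE x in M. Z' x = Z x))))
    \<and>
    (\<forall>X. X \<in> borel_measurable (F T) \<and> (\<exists>C. AE x in M. \<bar>X x\<bar> \<le> C) \<and> (AE x in M. X x < 0) \<longrightarrow>
      (\<exists>Z. Z \<in> borel_measurable (F t) \<and> (AE x in M. Z x \<le> 0) \<and>
          (\<exists>c \<in> borel_measurable (F 0). AE x in M. c x \<le> Z x) \<and>
          (\<forall>A \<in> sets (F t). AE x in M.
              cond_ess_inf M (F 0) (\<lambda>y. Z y * indicator A y) x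
            = cond_ess_inf M (F 0) (\<lambda>y. X y * indicator A y) x) \<and>
          (\<forall>Z'. Z' \<in> borel_measurable (F t) \<and> (AE x in M. Z' x \<le> 0) \<and>
              (\<exists>c \<in> borel_measurable (F 0). AE x in M. c x \<le> Z' x) \<and>
              (\<forall>A \<in> sets (F t). AE x in M.
                 cond_ess_inf M (F 0) (\<lambda>y. Z' y * indicator A y) x
               = cond_ess_inf M (F 0) (\<lambda>y. X y * indicator A y) x)
            \<longrightarrow> (AE x in M. Z' x = Z x))))"
proof -
  have P: "prob_space M" by fact
  interpret prob_space M by fact
  have t0: "0 \<le> t" "t \<le> T" using assms(5) by auto
  have c0: "complete_subalgebra M (F 0)" using assms(3) t0 by auto
  have ct: "complete_subalgebra M (F t)" using assms(3) t0 by auto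
  have sub0: "subalgebra M (F 0)" using c0 by (simp add: complete_subalgebra_def)
  have subt: "subalgebra M (F t)" using ct by (simp add: complete_subalgebra_def)
  have s0t: "sets (F 0) \<subseteq> sets (F t)" using assms(4)[of 0 t] t0 by auto
  have A: "\<exists>Z. Linf_nonpos M (F t) Z \<and>
          (\<forall>A \<in> sets (F t). AE x in M.
              cond_ess_inf M (F 0) (\<lambda>y. Z y * indicator A y) x
            = cond_ess_inf M (F 0) (\<lambda>y. X y * indicator A y) x) \<and>
          (AE x in M. - C \<le> Z x) \<and>
          (\<forall>Z'. Z' \<in> borel_measurable (F t) \<and> (AE x in M. Z' x \<le> 0) \<and>
              (\<forall>A \<in> sets (F t). AE x in M.
                 cond_ess_inf M (F 0) (\<lambda>y. Z' y * indicator A y) x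
               = cond_ess_inf M (F 0) (\<lambda>y. X y * indicator A y) x)
            \<longrightarrow> (AE x in M. Z' x = Z x))"
    if X0: "AE x in M. X x \<le> 0" and XC: "AE x in M. \<bar>X x\<bar> \<le> C" for X C
  proof -
    obtain Z where Zm: "Z \<in> borel_measurable (F t)" and Z0: "AE x in M. Z x \<le> 0"
      and ZC: "AE x in M. \<bar>Z x\<bar> \<le> C"
      and Zeq: "\<forall>A \<in> sets (F t). cond_ess_inf M (F 0) (\<lambda>y. Z y * indicator A y) = cond_ess_inf M (F 0) (\<lambda>y. X y * indicator A y)"
      using exist[OF P sub0 subt s0t X0 XC] by blast
    show ?thesis
    proof (intro exI conjI allI impI ballI)
      show "Linf_nonpos M (F t) Z" unfolding Linf_nonpos_def using Zm Z0 ZC by blast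
      show "AE x in M. cond_ess_inf M (F 0) (\<lambda>y. Z y * indicator A y) x
            = cond_ess_inf M (F 0) (\<lambda>y. X y * indicator A y) x" if "A \<in> sets (F t)" for A
        using Zeq that by simp
      show "AE x in M. - C \<le> Z x" using ZC by eventually_elim simp
      fix Z' assume H: "Z' \<in> borel_measurable (F t) \<and> (AE x in M. Z' x \<le> 0) \<and>
              (\<forall>A \<in> sets (F t). AE x in M.
                 cond_ess_inf M (F 0) (\<lambda>y. Z' y * indicator A y) x
               = cond_ess_inf M (F 0) (\<lambda>y. X y * indicator A y) x)"
      show "AE x in M. Z' x = Z x"
      proof (rule uniq[OF P sub0 subt Zm _ Z0])
        show "Z' \<in> borel_measurable (F t)" "AE x in M. Z' x \<le> 0" using H by auto
        fix A assume "A \<in> sets (F t)"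
        with H Zeq show "AE x in M. cond_ess_inf M (F 0) (\<lambda>y. Z y * indicator A y) x =
            cond_ess_inf M (F 0) (\<lambda>y. Z' y * indicator A y) x"
          by (auto elim: AE_mp)
      qed
    qed
  qed
  show ?thesis
  proof (intro conjI allI impI)
    fix X :: "'a \<Rightarrow> real" assume "Linf_nonpos M (F T) X"
    then obtain C where X0: "AE x in M. X x \<le> 0" and XC: "AE x in M. \<bar>X x\<bar> \<le> C"
      unfolding Linf_nonpos_def by blast
    from A[OF X0 XC] obtain Z where Z: "Linf_nonpos M (F t) Z"
      "\<forall>A \<in> sets (F t). AE x in M.
              cond_ess_inf M (F 0) (\<lambda>y. Z y * indicator A y) x
            = cond_ess_inf M (F 0) (\<lambda>y. X y * indicator A y) x"
      "\<forall>Z'. Z' \<in> borel_measurable (F t) \<and> (AE x in M. Z' x \<le> 0) \<and>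
              (\<forall>A \<in> sets (F t). AE x in M.
                 cond_ess_inf M (F 0) (\<lambda>y. Z' y * indicator A y) x
               = cond_ess_inf M (F 0) (\<lambda>y. X y * indicator A y) x)
            \<longrightarrow> (AE x in M. Z' x = Z x)" by blast
    show "\<exists>Z. Linf_nonpos M (F t) Z \<and>
          (\<forall>A \<in> sets (F t). AE x in M.
              cond_ess_inf M (F 0) (\<lambda>y. Z y * indicator A y) x
            = cond_ess_inf M (F 0) (\<lambda>y. X y * indicator A y) x) \<and>
          (\<forall>Z'. Linf_nonpos M (F t) Z' \<and>
              (\<forall>A \<in> sets (F t). AE x in M.
                 cond_ess_inf M (F 0) (\<lambda>y. Z' y * indicator A y) x
               = cond_ess_inf M (F 0) (\<lambda>y. X y * indicator A y) x)
            \<longrightarrow> (AE x in M. Z' x = Z x))"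
      using Z unfolding Linf_nonpos_def by blast
  next
    fix X :: "'a \<Rightarrow> real" assume H: "X \<in> borel_measurable (F T) \<and> (\<exists>C. AE x in M. \<bar>X x\<bar> \<le> C) \<and> (AE x in M. X x < 0)"
    then obtain C where XC: "AE x in M. \<bar>X x\<bar> \<le> C" by blast
    have "AE x in M. X x < 0" using H by blast
    then have X0: "AE x in M. X x \<le> 0" by eventually_elim simp
    from A[OF X0 XC] obtain Z where Z: "Linf_nonpos M (F t) Z"
      "\<forall>A \<in> sets (F t). AE x in M.
              cond_ess_inf M (F 0) (\<lambda>y. Z y * indicator A y) x
            = cond_ess_inf M (F 0) (\<lambda>y. X y * indicator A y) x"
      "AE x in M. - C \<le> Z x"
      "\<forall>Z'. Z' \<in> borel_measurable (F t) \<and> (AE x in M. Z' x \<le> 0) \<and>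
              (\<forall>A \<in> sets (F t). AE x in M.
                 cond_ess_inf M (F 0) (\<lambda>y. Z' y * indicator A y) x
               = cond_ess_inf M (F 0) (\<lambda>y. X y * indicator A y) x)
            \<longrightarrow> (AE x in M. Z' x = Z x)" by blast
    have c: "\<exists>c \<in> borel_measurable (F 0). AE x in M. c x \<le> Z x"
      by (rule bexI[of _ "\<lambda>_. - C"]) (use Z(3) in auto)
    show "\<exists>Z. Z \<in> borel_measurable (F t) \<and> (AE x in M. Z x \<le> 0) \<and>
          (\<exists>c \<in> borel_measurable (F 0). AE x in M. c x \<le> Z x) \<and>
          (\<forall>A \<in> sets (F t). AE x in M.
              cond_ess_inf M (F 0) (\<lambda>y. Z y * indicator A y) x
            = cond_ess_inf M (F 0) (\<lambda>y. X y * indicator A y) x) \<and>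
          (\<forall>Z'. Z' \<in> borel_measurable (F t) \<and> (AE x in M. Z' x \<le> 0) \<and>
              (\<exists>c \<in> borel_measurable (F 0). AE x in M. c x \<le> Z' x) \<and>
              (\<forall>A \<in> sets (F t). AE x in M.
                 cond_ess_inf M (F 0) (\<lambda>y. Z' y * indicator A y) x
               = cond_ess_inf M (F 0) (\<lambda>y. X y * indicator A y) x)
            \<longrightarrow> (AE x in M. Z' x = Z x))"
      using Z c unfolding Linf_nonpos_def by blast
  qed
qed

end
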